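(* Let $g:[0,\infty)\to\mathbb{R}$ be any function and define $\hat H$ on finite sequences of nonnegative reals with positive sum by $\hat H(a_1,\ldots,a_n)=g(a_1)+\cdots+g(a_n)-g(a_1+\cdots+a_n)$. Define $D(a,b)=g(ab)-a\,g(b)-b\,g(a)$ for $a,b\ge 0$. Then $\hat H$ is homogeneous (i.e. $\hat H(ca_1,\ldots,ca_n)=c\,\hat H(a_1,\ldots,a_n)$ for all $c>0$) if and only if for every $a>0$ the function $b\mapsto D(a,b)$ is additive on $[0,\infty)$, i.e. $D(a,b_1+b_2)=D(a,b_1)+D(a,b_2)$ for all $b_1,b_2\ge0$. Moreover, if $\hat H$ is homogeneous and $g(1)=0$, then $g(ab)=a\,g(b)+b\,g(a)$ for all nonnegative rational numbers $a,b$. *)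

theory Defs
  imports Complex_Main
begin

text \<open>g is given on all reals; only its values on [0,inf) are ever used.\<close>

definition Hhat :: "(real \<Rightarrow> real) \<Rightarrow> real list \<Rightarrow> real" where
  "Hhat g as = sum_list (map g as) - g (sum_list as)"

definition Hhat_homogeneous :: "(real \<Rightarrow> real) \<Rightarrow> bool" where
  "Hhat_homogeneous g \<longleftrightarrow>
     (\<forall>as c. (\<forall>x\<in>set as. x \<ge> 0) \<and> sum_list as > 0 \<and> c > 0 \<longrightarrow>
        Hhat g (map (\<lambda>x. c * x) as) = c * Hhat g as)"

definition Dg :: "(real \<Rightarrow> real) \<Rightarrow> real \<Rightarrow> real \<Rightarrow> real" where
  "Dg g a b = g (a * b) - a * g b - b * g a"

end

theory Submission
  imports Defs
begin

lemma H_cons: "Hhat g (x#xs) = Hhat g xs + (g x + g (sum_list xs) - g (x + sum_list xs))"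
  by (simp add: Hhat_def)

lemma hom_list:
  assumes g0: "g 0 = 0"
    and h2: "\<forall>c>0. \<forall>x y. x \<ge> 0 \<longrightarrow> y \<ge> 0 \<longrightarrow>
        g (c*x) + g (c*y) - g (c*x + c*y) = c * (g x + g y - g (x+y))"
    and c: "c > 0"
  shows "(\<forall>x\<in>set xs. x \<ge> 0) \<Longrightarrow> Hhat g (map (\<lambda>x. c * x) xs) = c * Hhat g xs"
proof (induction xs)
  case Nil
  then show ?case using g0 by (simp add: Hhat_def)
next
  case (Cons x xs)
  have S: "sum_list (map (\<lambda>x. c * x) xs) = c * sum_list xs"
    by (simp add: sum_list_const_mult)
  have nn: "sum_list xs \<ge> 0" using Cons.prems by (simp add: sum_list_nonneg)
  have IH: "Hhat g (map (\<lambda>x. c * x) xs) = c * Hhat g xs" using Cons by simp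
  have "g (c*x) + g (c*sum_list xs) - g (c*x + c*sum_list xs)
        = c * (g x + g (sum_list xs) - g (x + sum_list xs))"
    using h2 c nn Cons.prems by simp
  then show ?case using IH S by (simp add: H_cons algebra_simps)
qed

lemma D_diff: "Dg g a (b1 + b2) - Dg g a b1 - Dg g a b2
   = a * (g b1 + g b2 - g (b1+b2)) - (g (a*b1) + g (a*b2) - g (a*b1 + a*b2))"
  by (simp add: Dg_def algebra_simps)

lemma D_mult:
  assumes add: "\<forall>b1 b2. b1 \<ge> 0 \<longrightarrow> b2 \<ge> 0 \<longrightarrow> Dg g a (b1 + b2) = Dg g a b1 + Dg g a b2"
    and x: "x \<ge> 0"
  shows "Dg g a (real n * x) = real n * Dg g a x"
proof (induction n)
  case 0
  have "Dg g a (0+0) = Dg g a 0 + Dg g a 0" using add by (metis order_refl)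
  then show ?case by simp
next
  case (Suc n)
  have "Dg g a (real n * x + x) = Dg g a (real n * x) + Dg g a x"
    using add x by simp
  then show ?case using Suc by (simp add: algebra_simps)
qed

theorem mainTheorem3:
  fixes g :: "real \<Rightarrow> real"
  shows "(Hhat_homogeneous g \<longleftrightarrow>
           (\<forall>a>0. \<forall>b1 b2. b1 \<ge> 0 \<longrightarrow> b2 \<ge> 0 \<longrightarrow>
              Dg g a (b1 + b2) = Dg g a b1 + Dg g a b2))
       \<and> (Hhat_homogeneous g \<longrightarrow> g 1 = 0 \<longrightarrow>
           (\<forall>a\<in>\<rat>. \<forall>b\<in>\<rat>. a \<ge> 0 \<longrightarrow> b \<ge> 0 \<longrightarrow> g (a * b) = a * g b + b * g a))"
proof -
  have fwd: "\<forall>a>0. \<forall>b1 b2. b1 \<ge> 0 \<longrightarrow> b2 \<ge> 0 \<longrightarrow>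
              Dg g a (b1 + b2) = Dg g a b1 + Dg g a b2" if H: "Hhat_homogeneous g"
  proof (intro allI impI)
    fix a b1 b2 :: real assume a: "a > 0" and b1: "b1 \<ge> 0" and b2: "b2 \<ge> 0"
    have "Hhat g (map (\<lambda>x. 2 * x) [0,1]) = 2 * Hhat g [0,1]"
    proof -
      have "(\<forall>x\<in>set [0::real,1]. x \<ge> 0) \<and> sum_list [0::real,1] > 0 \<and> (2::real) > 0" by simp
      then show ?thesis using H unfolding Hhat_homogeneous_def by blast
    qed
    then have g0: "g 0 = 0" by (simp add: Hhat_def)
    show "Dg g a (b1 + b2) = Dg g a b1 + Dg g a b2"
    proof (cases "b1 + b2 > 0")
      case True
      have "Hhat g (map (\<lambda>x. a * x) [b1,b2]) = a * Hhat g [b1,b2]"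
      proof -
        have "(\<forall>x\<in>set [b1,b2]. x \<ge> 0) \<and> sum_list [b1,b2] > 0 \<and> a > 0" using True a b1 b2 by simp
        then show ?thesis using H unfolding Hhat_homogeneous_def by blast
      qed
      then have "a * (g b1 + g b2 - g (b1+b2)) - (g (a*b1) + g (a*b2) - g (a*b1 + a*b2)) = 0"
        by (simp add: Hhat_def algebra_simps)
      then show ?thesis using D_diff[of g a b1 b2] by simp
    next
      case False
      then have "b1 = 0" "b2 = 0" using b1 b2 by auto
      then show ?thesis using g0 by (simp add: Dg_def)
    qed
  qed
  have bwd: "Hhat_homogeneous g" if A: "\<forall>a>0. \<forall>b1 b2. b1 \<ge> 0 \<longrightarrow> b2 \<ge> 0 \<longrightarrow>
              Dg g a (b1 + b2) = Dg g a b1 + Dg g a b2"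
  proof -
    have "Dg g 2 (0+0) = Dg g 2 0 + Dg g 2 0" using A by (metis order_refl zero_less_numeral)
    then have g0: "g 0 = 0" by (simp add: Dg_def)
    have h2: "\<forall>c>0. \<forall>x y. x \<ge> 0 \<longrightarrow> y \<ge> 0 \<longrightarrow>
        g (c*x) + g (c*y) - g (c*x + c*y) = c * (g x + g y - g (x+y))"
    proof (intro allI impI)
      fix c x y :: real assume "c > 0" "x \<ge> 0" "y \<ge> 0"
      then have "Dg g c (x + y) = Dg g c x + Dg g c y" using A by blast
      then show "g (c*x) + g (c*y) - g (c*x + c*y) = c * (g x + g y - g (x+y))"
        using D_diff[of g c x y] by simp
    qed
    show ?thesis unfolding Hhat_homogeneous_def
      using hom_list[OF g0 h2] by blast
  qed
  have part2: "g (a * b) = a * g b + b * g a"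
    if H: "Hhat_homogeneous g" and g1: "g 1 = 0" and "a \<in> \<rat>" "b \<in> \<rat>" "a \<ge> 0" "b \<ge> 0" for a b
  proof -
    have A: "\<forall>a>0. \<forall>b1 b2. b1 \<ge> 0 \<longrightarrow> b2 \<ge> 0 \<longrightarrow>
              Dg g a (b1 + b2) = Dg g a b1 + Dg g a b2" using fwd H by blast
    have g0: "g 0 = 0"
    proof -
      have "Dg g 2 (0+0) = Dg g 2 0 + Dg g 2 0" using A by (metis order_refl zero_less_numeral)
      then show ?thesis by (simp add: Dg_def)
    qed
    have "Dg g a b = 0"
    proof (cases "a = 0")
      case True
      then show ?thesis using g0 by (simp add: Dg_def)
    next
      case False
      then have apos: "a > 0" using \<open>a \<ge> 0\<close> by simp
      have Aa: "\<forall>b1 b2. b1 \<ge> 0 \<longrightarrow> b2 \<ge> 0 \<longrightarrow> Dg g a (b1 + b2) = Dg g a b1 + Dg g a b2"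
        using A apos by blast
      obtain p q :: nat where q: "q \<noteq> 0" and bpq: "\<bar>b\<bar> = real p / real q"
        using Rats_abs_nat_div_natE[OF \<open>b \<in> \<rat>\<close>] by metis
      have bpq': "b = real p / real q" using bpq \<open>b \<ge> 0\<close> by simp
      have D1: "Dg g a 1 = 0" using g1 by (simp add: Dg_def)
      have "real q * Dg g a b = Dg g a (real q * b)"
        using D_mult[OF Aa \<open>b \<ge> 0\<close>] by simp
      also have "real q * b = real p * 1" using q bpq' by simp
      also have "Dg g a (real p * 1) = real p * Dg g a 1"
        using D_mult[OF Aa, of 1] by simp
      finally have "real q * Dg g a b = 0" using D1 by simp
      then show ?thesis using q by simp
    qed
    then show ?thesis by (simp add: Dg_def)
  qed
  show ?thesis using fwd bwd part2 by blast
qed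

end
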